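(* Consider the planted submatrix problem with $\rho\le1/2$. Let $k\ge0$ be an integer, $D=2k+1$, and $f(Y)=\tau_k\big(\frac{1}{\lambda\rho n}\sum_{i=1}^nY_{1i}\big)$. For any $0<r<1$, if \[ \lambda\ge\frac{24}{r\rho\sqrt n}\sqrt{\log8+2D\log(9/\rho)} \quad\text{and}\quad \rho\ge\frac{324}{r^2n}\big[\log8+2D\log(9/\rho)\big], \] then $\mathbb{E}(f(Y)-x)^2\le D^2r^{D-1}$.
   Context: Planted submatrix problem: observe $Y=\lambda vv^\top+W$ ($n\times n$), where $v\in\{0,1\}^n$ has i.i.d. $\mathrm{Bernoulli}(\rho)$ entries, $W$ is symmetric with $W_{ij}=W_{ji}\sim\mathcal{N}(0,1)$ for $i<j$, $W_{ii}\sim\mathcal{N}(0,2)$, the $\{W_{ij}:i\le j\}$ independent and independent of $v$; $\lambda>0$, $\rho\in(0,1)$; target $x=v_1$. $\tau_k(y)=(2k+1)\binom{2k}{k}\int_0^yt^k(1-t)^k\,dt$, a polynomial of degree $2k+1$. Logarithms are natural. *)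

theory Defs
  imports "HOL-Probability.Probability"
begin

text \<open>Indices are 0-based: the n x n matrix is indexed by 0..n-1, and the target
  x = v_1 of the paper is the entry v 0; row 1 of the paper is row 0 here.\<close>

definition tau :: "nat \<Rightarrow> real \<Rightarrow> real" where
  "tau k y = real (2*k+1) * real ((2*k) choose k) *
     (LBINT t = ereal 0..ereal y. t ^ k * (1 - t) ^ k)"

definition signal_measure :: "nat \<Rightarrow> real \<Rightarrow> (nat \<Rightarrow> bool) measure" where
  "signal_measure n \<rho> = PiM {0..<n} (\<lambda>_. measure_pmf (bernoulli_pmf \<rho>))"

definition noise_measure :: "nat \<Rightarrow> (nat \<times> nat \<Rightarrow> real) measure" where
  "noise_measure n = PiM {(i,j). i \<le> j \<and> j < n}
     (\<lambda>(i,j). if i = j then density lborel (normal_density 0 (sqrt 2))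
              else density lborel (normal_density 0 1))"

definition planted_measure :: "nat \<Rightarrow> real \<Rightarrow> ((nat \<Rightarrow> bool) \<times> (nat \<times> nat \<Rightarrow> real)) measure" where
  "planted_measure n \<rho> = signal_measure n \<rho> \<Otimes>\<^sub>M noise_measure n"

definition vvec :: "(nat \<Rightarrow> bool) \<times> (nat \<times> nat \<Rightarrow> real) \<Rightarrow> nat \<Rightarrow> real" where
  "vvec \<omega> i = (if fst \<omega> i then 1 else 0)"

definition Wmat :: "(nat \<Rightarrow> bool) \<times> (nat \<times> nat \<Rightarrow> real) \<Rightarrow> nat \<Rightarrow> nat \<Rightarrow> real" where
  "Wmat \<omega> i j = snd \<omega> (min i j, max i j)"

definition Ymat :: "real \<Rightarrow> (nat \<Rightarrow> bool) \<times> (nat \<times> nat \<Rightarrow> real) \<Rightarrow> nat \<Rightarrow> nat \<Rightarrow> real" where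
  "Ymat lam \<omega> i j = lam * vvec \<omega> i * vvec \<omega> j + Wmat \<omega> i j"

end

theory Submission
  imports Defs "HOL-Analysis.Analysis"
begin

definition Fk :: "nat \<Rightarrow> real \<Rightarrow> real" where
  "Fk k x = (\<Sum>j\<le>k. real (k choose j) * (-1)^j * x^(k+j+1) / real (k+j+1))"

lemma Fk_term: "real (k choose j) * (-1)^j * (real (k+j+1) * x^(k+j)) / real (k+j+1) = x^k * (real (k choose j) * (-x)^j * 1^(k-j))"
proof -
  have N: "real (k+j+1) \<noteq> 0" by simp
  have "real (k choose j) * (-1)^j * (real (k+j+1) * x^(k+j)) / real (k+j+1) = real (k choose j) * (-1)^j * x^(k+j)"
    using N by simp
  also have "\<dots> = x^k * (real (k choose j) * ((-1)^j * x^j))" by (simp add: power_add)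
  also have "\<dots> = x^k * (real (k choose j) * (-x)^j * 1^(k-j))" by (simp only: power_minus[of x] power_one mult_1_right)
  finally show ?thesis .
qed

lemma Fk_deriv: "(Fk k has_real_derivative (x^k * (1-x)^k)) (at x)"
proof -
  have "(Fk k has_real_derivative (\<Sum>j\<le>k. real (k choose j) * (-1)^j * (real (k+j+1) * x^(k+j)) / real (k+j+1))) (at x)"
    unfolding Fk_def
    apply (auto intro!: derivative_eq_intros)
    apply (rule sum.cong, simp)
    subgoal for j by (cases "k+j") (auto simp: field_simps)
    done
  moreover have "(\<Sum>j\<le>k. real (k choose j) * (-1)^j * (real (k+j+1) * x^(k+j)) / real (k+j+1)) = x^k * (1-x)^k"
  proof -
    have "(\<Sum>j\<le>k. real (k choose j) * (-1)^j * (real (k+j+1) * x^(k+j)) / real (k+j+1))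
        = (\<Sum>j\<le>k. x^k * (real (k choose j) * (-x)^j * 1^(k-j)))"
      by (rule sum.cong) (rule refl, rule Fk_term)
    also have "\<dots> = x^k * (\<Sum>j\<le>k. real (k choose j) * (-x)^j * 1^(k-j))"
      by (simp only: sum_distrib_left)
    also have "(\<Sum>j\<le>k. real (k choose j) * (-x)^j * 1^(k-j)) = (-x + 1)^k"
      by (rule binomial_ring[symmetric])
    finally show ?thesis by simp
  qed
  ultimately show ?thesis by simp
qed

lemma tau_Fk: "tau k y = real (2*k+1) * real ((2*k) choose k) * (Fk k y - Fk k 0)"
proof -
  have "(LBINT t = ereal 0..ereal y. t ^ k * (1 - t) ^ k) = Fk k y - Fk k 0"
    apply (rule interval_integral_FTC_finite)
     apply (intro continuous_intros)
    apply (rule has_vector_derivative_at_within)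
    apply (subst has_real_derivative_iff_has_vector_derivative[symmetric])
    apply (rule Fk_deriv)
    done
  then show ?thesis unfolding tau_def by simp
qed

lemma Fk_01: "real (2*k+1) * real ((2*k) choose k) * (Fk k 1 - Fk k 0) = 1"
proof -
  have I1: "((\<lambda>t. t^k * (1-t)^k) has_integral (Fk k 1 - Fk k 0)) {0..1}"
    apply (rule fundamental_theorem_of_calculus)
     apply simp
    apply (rule has_vector_derivative_at_within)
    apply (subst has_real_derivative_iff_has_vector_derivative[symmetric])
    apply (rule Fk_deriv)
    done
  have I2: "((\<lambda>t. t powr (real (k+1) - 1) * (1 - t) powr (real (k+1) - 1)) has_integral Beta (real (k+1)) (real (k+1))) {0..1}"
    by (rule has_integral_Beta_real) auto
  have I3: "((\<lambda>t. t^k * (1-t)^k) has_integral Beta (real (k+1)) (real (k+1))) {0..1}"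
  proof (rule has_integral_spike_finite[OF _ _ I2])
    show "finite {0::real,1}" by simp
    fix t assume "t \<in> {0..1} - {0::real,1}"
    then have "0 < t" "0 < 1 - t" by auto
    then show "t^k * (1-t)^k = t powr (real (k+1) - 1) * (1 - t) powr (real (k+1) - 1)"
      by (simp add: powr_realpow)
  qed
  have E: "Fk k 1 - Fk k 0 = Beta (real (k+1)) (real (k+1))"
    using I1 I3 by (rule has_integral_unique)
  have G1: "Gamma (real (k+1)) = fact k"
    using Gamma_fact[of k, where 'a=real] by (simp add: add.commute)
  have G2: "Gamma (real (k+1) + real (k+1)) = fact (2*k+1)"
    using Gamma_fact[of "2*k+1", where 'a=real] by (simp add: add.commute)
  have B: "Beta (real (k+1)) (real (k+1)) = fact k * fact k / fact (2*k+1)"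
    unfolding Beta_def G1 G2 by simp
  have C: "real ((2*k) choose k) = fact (2*k) / (fact k * fact k)"
    using binomial_fact[of k "2*k", where 'a=real] by (simp add: mult_2)
  have F: "(fact (2*k+1) :: real) = real (2*k+1) * fact (2*k)"
    by (simp add: fact_Suc del: of_nat_Suc) 
  have P: "(fact k :: real) > 0" "(fact (2*k) :: real) > 0" by auto
  have gen: "\<And>a b c::real. a > 0 \<Longrightarrow> b > 0 \<Longrightarrow> c > 0 \<Longrightarrow> c * (b / (a * a)) * (a * a / (c * b)) = 1"
    by (simp add: field_simps)
  show ?thesis unfolding E B C F by (rule gen) (use P in auto)
qed

lemma Fk_mvt: "\<exists>z. \<bar>z - a\<bar> \<le> \<bar>y - a\<bar> \<and> Fk k y - Fk k a = (y - a) * (z^k * (1-z)^k)"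
proof -
  have cont: "\<And>s. continuous_on s (Fk k)"
    using Fk_deriv by (meson DERIV_isCont continuous_at_imp_continuous_on)
  have dif: "\<And>x. Fk k differentiable (at x)"
    using Fk_deriv real_differentiable_def by blast
  consider "y = a" | "a < y" | "y < a" by linarith
  then show ?thesis
  proof cases
    case 1 then show ?thesis by auto
  next
    case 2
    from MVT[OF 2 cont dif] obtain l z where "a < z" "z < y" "DERIV (Fk k) z :> l" "Fk k y - Fk k a = (y - a) * l"
      by blast
    moreover have "l = z^k * (1-z)^k" using DERIV_unique[OF \<open>DERIV (Fk k) z :> l\<close> Fk_deriv] .
    ultimately show ?thesis by (intro exI[of _ z]) auto
  next
    case 3
    from MVT[OF 3 cont dif] obtain l z where "y < z" "z < a" "DERIV (Fk k) z :> l" "Fk k a - Fk k y = (a - y) * l"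
      by blast
    moreover have "l = z^k * (1-z)^k" using DERIV_unique[OF \<open>DERIV (Fk k) z :> l\<close> Fk_deriv] .
    ultimately show ?thesis by (intro exI[of _ z]) (auto simp: algebra_simps)
  qed
qed

lemma prod_bound:
  fixes z a d :: real
  assumes "a = 0 \<or> a = 1" "\<bar>z - a\<bar> \<le> d"
  shows "\<bar>z^k * (1-z)^k\<bar> \<le> d^k * (1 + d)^k"
proof -
  have "\<bar>z^k * (1-z)^k\<bar> = \<bar>z\<bar>^k * \<bar>1-z\<bar>^k" by (simp add: abs_mult power_abs)
  also have "\<dots> \<le> d^k * (1 + d)^k"
    using assms(1)
  proof
    assume "a = 0"
    then show ?thesis using assms(2)
      by (intro mult_mono power_mono) auto
  next
    assume "a = 1"
    then have "\<bar>1-z\<bar> \<le> d" "\<bar>z\<bar> \<le> 1 + d" using assms(2) by auto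
    then have "\<bar>1-z\<bar>^k * \<bar>z\<bar>^k \<le> d^k * (1 + d)^k"
      by (intro mult_mono power_mono) auto
    then show ?thesis by (simp add: mult.commute)
  qed
  finally show ?thesis .
qed

lemma pow_le_exp: fixes x :: real assumes "x \<ge> 0" shows "x^m / fact m \<le> exp x"
proof -
  have s: "summable (\<lambda>n. x^n / fact n)" using summable_exp[of x] by (simp add: divide_inverse mult.commute)
  have "x^m / fact m = (\<Sum>n\<in>{m}. x^n / fact n)" by simp
  also have "\<dots> \<le> (\<Sum>n. x^n / fact n)"
    by (rule sum_le_suminf[OF s]) (use assms in auto)
  also have "\<dots> = exp x" by (simp add: exp_def divide_inverse mult.commute)
  finally show ?thesis .
qed

lemma pow_le_exp2: fixes x :: real assumes "x \<ge> 0" shows "x^m \<le> real m ^ m * exp x"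
proof -
  have "x^m \<le> fact m * exp x" using pow_le_exp[OF assms, of m] by (simp add: field_simps)
  also have "\<dots> \<le> real m ^ m * exp x"
    using fact_le_power[of m, where 'a=real] by (intro mult_right_mono) auto
  finally show ?thesis .
qed

lemma normal_mgf:
  fixes \<sigma> c :: real assumes "\<sigma> > 0"
  shows "(\<integral>\<^sup>+x. ennreal (exp (c * x)) \<partial>density lborel (normal_density 0 \<sigma>)) = ennreal (exp (c^2 * \<sigma>^2 / 2))"
proof -
  have eq: "\<And>x. normal_density 0 \<sigma> x * exp (c * x) = exp (c^2 * \<sigma>^2 / 2) * normal_density (c * \<sigma>^2) \<sigma> x"
    unfolding normal_density_def using assms
    by (simp add: exp_add[symmetric] power2_eq_square field_simps)
  have one: "(\<integral>\<^sup>+x. ennreal (normal_density (c * \<sigma>^2) \<sigma> x) \<partial>lborel) = 1"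
  proof -
    interpret prob_space "density lborel (normal_density (c * \<sigma>^2) \<sigma>)"
      using prob_space_normal_density assms by blast
    have "emeasure (density lborel (normal_density (c * \<sigma>^2) \<sigma>)) UNIV = 1"
      using emeasure_space_1 by simp
    then show ?thesis by (simp add: emeasure_density)
  qed
  have "(\<integral>\<^sup>+x. ennreal (exp (c * x)) \<partial>density lborel (normal_density 0 \<sigma>))
      = (\<integral>\<^sup>+x. ennreal (normal_density 0 \<sigma> x) * ennreal (exp (c * x)) \<partial>lborel)"
    by (rule nn_integral_density) auto
  also have "\<dots> = (\<integral>\<^sup>+x. ennreal (exp (c^2 * \<sigma>^2 / 2)) * ennreal (normal_density (c * \<sigma>^2) \<sigma> x) \<partial>lborel)"
    by (intro nn_integral_cong) (simp add: ennreal_mult'[symmetric] eq)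
  also have "\<dots> = ennreal (exp (c^2 * \<sigma>^2 / 2)) * (\<integral>\<^sup>+x. ennreal (normal_density (c * \<sigma>^2) \<sigma> x) \<partial>lborel)"
    by (rule nn_integral_cmult) simp
  also have "\<dots> = ennreal (exp (c^2 * \<sigma>^2 / 2))" using one by simp
  finally show ?thesis .
qed

lemma pow_exp_bound:
  fixes \<rho> x :: real assumes "0 \<le> \<rho>" "\<rho> \<le> 1"
  shows "(1 - \<rho> + \<rho> * exp x)^n \<le> exp (real n * \<rho> * (exp x - 1))"
proof -
  have b0: "0 \<le> 1 - \<rho> + \<rho> * exp x" using assms by (simp add: add_nonneg_nonneg)
  have "1 - \<rho> + \<rho> * exp x \<le> exp (\<rho> * (exp x - 1))"
    using exp_ge_add_one_self[of "\<rho> * (exp x - 1)"] by (simp add: algebra_simps)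
  then have "(1 - \<rho> + \<rho> * exp x)^n \<le> (exp (\<rho> * (exp x - 1)))^n"
    using b0 by (rule power_mono)
  also have "\<dots> = exp (real n * \<rho> * (exp x - 1))"
    by (simp add: exp_of_nat_mult[symmetric] mult.assoc)
  finally show ?thesis .
qed

lemma mgf_pos:
  fixes \<rho> h :: real assumes "0 \<le> \<rho>" "\<rho> \<le> 1" "0 \<le> h" "h \<le> 1"
  shows "exp (- (real n * \<rho> * h)) * (1 - \<rho> + \<rho> * exp h)^n \<le> exp (real n * \<rho> * h^2)"
proof -
  have "exp (- (real n * \<rho> * h)) * (1 - \<rho> + \<rho> * exp h)^n
      \<le> exp (- (real n * \<rho> * h)) * exp (real n * \<rho> * (exp h - 1))"
    by (intro mult_left_mono pow_exp_bound assms) simp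
  also have "\<dots> = exp (real n * \<rho> * (exp h - 1 - h))"
    by (simp add: exp_add[symmetric] algebra_simps)
  also have "\<dots> \<le> exp (real n * \<rho> * h^2)"
  proof -
    have "exp h - 1 - h \<le> h^2" using exp_bound[OF assms(3,4)] by simp
    then show ?thesis using assms by (simp add: mult_left_mono)
  qed
  finally show ?thesis .
qed

lemma mgf_neg:
  fixes \<rho> h :: real assumes "0 \<le> \<rho>" "\<rho> \<le> 1" "0 \<le> h" "h \<le> 1"
  shows "exp (real n * \<rho> * h) * (1 - \<rho> + \<rho> * exp (- h))^n \<le> exp (real n * \<rho> * h^2)"
proof -
  have "exp (real n * \<rho> * h) * (1 - \<rho> + \<rho> * exp (-h))^n
      \<le> exp (real n * \<rho> * h) * exp (real n * \<rho> * (exp (-h) - 1))"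
    by (intro mult_left_mono pow_exp_bound assms) simp
  also have "\<dots> = exp (real n * \<rho> * (exp (-h) - 1 + h))"
    by (simp add: exp_add[symmetric] algebra_simps)
  also have "\<dots> \<le> exp (real n * \<rho> * h^2)"
  proof -
    have e1: "1 + h \<le> exp h" by (rule exp_ge_add_one_self[of h, unfolded add.commute[of h]])
    have "exp (-h) = 1 / exp h" by (simp add: exp_minus field_simps)
    also have "\<dots> \<le> 1 / (1 + h)" using e1 assms by (intro divide_left_mono) auto
    also have "\<dots> \<le> 1 - h + h^2"
    proof -
      have "1 \<le> (1 - h + h^2) * (1 + h)" using assms by (simp add: algebra_simps power2_eq_square power3_eq_cube)
      then show ?thesis using assms by (simp add: field_simps)
    qed
    finally have "exp (-h) - 1 + h \<le> h^2" by simp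
    then show ?thesis using assms by (simp add: mult_left_mono)
  qed
  finally show ?thesis .
qed

lemma tau_dev:
  assumes "a = 0 \<or> a = 1"
  shows "(tau k y - a)^2 \<le> (real (2*k+1) * real ((2*k) choose k))^2 * \<bar>y-a\<bar>^(2*k+2) * (1+\<bar>y-a\<bar>)^(2*k)"
proof -
  define c where "c = real (2*k+1) * real ((2*k) choose k)"
  have c0: "c \<ge> 0" unfolding c_def by simp
  have ta: "tau k y - a = c * (Fk k y - Fk k a)"
    using assms
  proof
    assume "a = 0" then show ?thesis unfolding tau_Fk c_def by simp
  next
    assume a1: "a = 1"
    have "c * (Fk k 1 - Fk k 0) = 1" unfolding c_def by (rule Fk_01)
    then show ?thesis unfolding tau_Fk c_def[symmetric] a1 by (simp add: algebra_simps)
  qed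
  obtain z where z: "\<bar>z - a\<bar> \<le> \<bar>y - a\<bar>" "Fk k y - Fk k a = (y - a) * (z^k * (1-z)^k)"
    using Fk_mvt by blast
  have pb: "\<bar>z^k * (1-z)^k\<bar> \<le> \<bar>y-a\<bar>^k * (1 + \<bar>y-a\<bar>)^k"
    by (rule prod_bound[OF assms z(1)])
  have "\<bar>tau k y - a\<bar> = c * (\<bar>y - a\<bar> * \<bar>z^k * (1-z)^k\<bar>)"
    unfolding ta z(2) using c0 by (simp add: abs_mult)
  also have "\<dots> \<le> c * (\<bar>y - a\<bar> * (\<bar>y-a\<bar>^k * (1 + \<bar>y-a\<bar>)^k))"
    using pb c0 by (intro mult_left_mono) auto
  finally have h: "\<bar>tau k y - a\<bar> \<le> c * (\<bar>y - a\<bar> * (\<bar>y-a\<bar>^k * (1 + \<bar>y-a\<bar>)^k))" .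
  have "(tau k y - a)^2 = \<bar>tau k y - a\<bar>^2" by simp
  also have "\<dots> \<le> (c * (\<bar>y - a\<bar> * (\<bar>y-a\<bar>^k * (1 + \<bar>y-a\<bar>)^k)))^2"
    using h by (intro power_mono) auto
  also have "\<dots> = c^2 * \<bar>y-a\<bar>^(2*k+2) * (1+\<bar>y-a\<bar>)^(2*k)"
  proof -
    fix u w :: real
    have e1: "\<And>u::real. u^(2*k+2) = (u^(k+1))^2"
    proof -
      fix u :: real have "2*k+2 = (k+1)*2" by simp
      then show "u^(2*k+2) = (u^(k+1))^2" by (simp only: power_mult)
    qed
    have e2: "\<And>w::real. w^(2*k) = (w^k)^2"
    proof -
      fix w :: real have "2*k = k*2" by simp
      then show "w^(2*k) = (w^k)^2" by (simp only: power_mult)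
    qed
    have e3: "\<And>u w::real. u * (u^k * w^k) = u^(k+1) * w^k" by simp
    show ?thesis unfolding e1 e2 e3 by (simp add: power_mult_distrib)
  qed
  finally show ?thesis unfolding c_def .
qed

lemma pointwise:
  fixes r :: real
  assumes "r > 0" "a = 0 \<or> a = 1"
  shows "(tau k y - a)^2 \<le> (real (2*k+1) * real ((2*k) choose k))^2 * (r/8)^(2*k+2)
           * (exp ((8 * real (2*k+2) / r + 2 * real k) * (y - a)) + exp (- ((8 * real (2*k+2) / r + 2 * real k) * (y - a))))"
proof -
  define c where "c = real (2*k+1) * real ((2*k) choose k)"
  define m where "m = 2*k+2"
  define t where "t = 8 * real m / r"
  define u where "u = \<bar>y - a\<bar>"
  have t0: "t > 0" unfolding t_def m_def using assms by simp
  have u0: "u \<ge> 0" unfolding u_def by simp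
  have "u^m = (t*u)^m / t^m" using t0 by (simp add: power_mult_distrib)
  also have "\<dots> \<le> real m ^ m * exp (t*u) / t^m"
    using pow_le_exp2[of "t*u" m] t0 u0 by (intro divide_right_mono) auto
  also have "\<dots> = (real m / t)^m * exp (t*u)" by (simp add: power_divide)
  also have "real m / t = r/8" unfolding t_def m_def using assms(1) by (simp add: field_simps)
  finally have h1: "u^m \<le> (r/8)^m * exp (t*u)" .
  have h2: "(1+u)^(2*k) \<le> exp (2 * real k * u)"
  proof -
    have "(1+u)^(2*k) \<le> (exp u)^(2*k)" using u0 by (intro power_mono) (auto simp: add.commute exp_ge_add_one_self)
    also have "\<dots> = exp (2 * real k * u)" by (simp add: exp_of_nat_mult[symmetric] mult.assoc)
    finally show ?thesis .
  qed
  have "(tau k y - a)^2 \<le> c^2 * u^m * (1+u)^(2*k)"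
    using tau_dev[OF assms(2), of k y] unfolding c_def u_def m_def .
  also have "\<dots> \<le> c^2 * ((r/8)^m * exp (t*u)) * exp (2 * real k * u)"
    using h1 h2 u0 assms(1) by (intro mult_mono mult_left_mono) auto
  also have "\<dots> = c^2 * (r/8)^m * exp ((t + 2 * real k) * u)"
    by (simp add: exp_add[symmetric] algebra_simps)
  also have "\<dots> \<le> c^2 * (r/8)^m * (exp ((t + 2 * real k) * (y - a)) + exp (- ((t + 2 * real k) * (y - a))))"
  proof (rule mult_left_mono)
    show "0 \<le> c^2 * (r/8)^m" using assms(1) by simp
    have "(t + 2 * real k) * u = (t + 2 * real k) * (y - a) \<or> (t + 2 * real k) * u = - ((t + 2 * real k) * (y - a))"
      unfolding u_def by (auto simp: abs_if algebra_simps)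
    then show "exp ((t + 2 * real k) * u) \<le> exp ((t + 2 * real k) * (y - a)) + exp (- ((t + 2 * real k) * (y - a)))"
      by (metis add_increasing add_increasing2 exp_ge_zero order_refl)
  qed
  finally show ?thesis unfolding c_def m_def t_def by simp
qed

lemma signal_mgf:
  fixes \<rho> c :: real assumes "0 \<le> \<rho>" "\<rho> \<le> 1"
  shows "(\<integral>\<^sup>+v. ennreal (exp (c * (\<Sum>i<n. if v i then 1 else 0))) \<partial>signal_measure n \<rho>)
       = ennreal ((1 - \<rho> + \<rho> * exp c)^n)"
proof -
  interpret product_sigma_finite "\<lambda>_::nat. measure_pmf (bernoulli_pmf \<rho>)"
    unfolding product_sigma_finite_def
    by (auto intro: prob_space_imp_sigma_finite prob_space_measure_pmf)
  have eq: "\<And>v. ennreal (exp (c * (\<Sum>i<n. if v i then 1 else 0)))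
            = (\<Prod>i\<in>{0..<n}. (\<lambda>b. ennreal (exp (c * (if b then 1 else 0)))) (v i))"
    by (simp add: prod_ennreal sum_distrib_left exp_sum atLeast0LessThan)
  have "(\<integral>\<^sup>+v. ennreal (exp (c * (\<Sum>i<n. if v i then 1 else 0))) \<partial>signal_measure n \<rho>)
      = (\<Prod>i\<in>{0..<n}. (\<integral>\<^sup>+b. ennreal (exp (c * (if b then 1 else 0))) \<partial>measure_pmf (bernoulli_pmf \<rho>)))"
    unfolding eq signal_measure_def
    by (rule product_nn_integral_prod) auto
  also have "\<dots> = (\<Prod>i\<in>{0..<n}. ennreal (1 - \<rho> + \<rho> * exp c))"
    using assms by (simp add: ennreal_mult'[symmetric] ennreal_plus[symmetric] algebra_simps del: ennreal_plus)
  also have "\<dots> = ennreal ((1 - \<rho> + \<rho> * exp c)^n)"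
  proof -
    have "(\<Prod>i\<in>{0..<n}. ennreal (1 - \<rho> + \<rho> * exp c)) = ennreal (1 - \<rho> + \<rho> * exp c) ^ n" by simp
    also have "\<dots> = ennreal ((1 - \<rho> + \<rho> * exp c)^n)"
      using assms by (intro ennreal_power) (auto intro: add_nonneg_nonneg)
    finally show ?thesis .
  qed
  finally show ?thesis .
qed

lemma prod_I_reindex:
  fixes f :: "nat \<times> nat \<Rightarrow> 'a::comm_monoid_mult"
  assumes "\<And>p. fst p \<noteq> 0 \<Longrightarrow> f p = 1"
  shows "(\<Prod>p\<in>{(i,j). i \<le> j \<and> j < n}. f p) = (\<Prod>j<n. f (0,j))"
proof -
  have fin: "finite {(i,j). i \<le> j \<and> j < (n::nat)}"
    by (rule finite_subset[of _ "{..<n} \<times> {..<n}"]) auto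
  have sub: "(\<lambda>j. (0,j)) ` {..<n} \<subseteq> {(i,j). i \<le> j \<and> j < n}" by auto
  have "(\<Prod>p\<in>{(i,j). i \<le> j \<and> j < n}. f p) = (\<Prod>p\<in>(\<lambda>j. (0,j)) ` {..<n}. f p)"
  proof (rule prod.mono_neutral_right[OF fin sub], rule ballI)
    fix p assume p: "p \<in> {(i,j). i \<le> j \<and> j < n} - (\<lambda>j. (0,j)) ` {..<n}"
    have "fst p \<noteq> 0"
    proof
      assume "fst p = 0"
      with p have "p = (0, snd p)" "snd p < n" by (cases p; auto)+
      then show False using p by (metis DiffD2 image_eqI lessThan_iff)
    qed
    then show "f p = 1" by (rule assms)
  qed
  also have "\<dots> = (\<Prod>j<n. f (0,j))"
    by (subst prod.reindex) (auto simp: inj_on_def)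
  finally show ?thesis .
qed

lemma noise_mgf:
  fixes c :: real assumes "n \<ge> 1"
  shows "(\<integral>\<^sup>+w. ennreal (exp (c * (\<Sum>j<n. w (0,j)))) \<partial>noise_measure n) = ennreal (exp (c^2 * real (n+1) / 2))"
proof -
  define M where "M = (\<lambda>(i::nat,j::nat). if i = j then density lborel (normal_density 0 (sqrt 2))
              else density lborel (normal_density 0 1))"
  have ps: "\<And>p. prob_space (M p)" unfolding M_def
    by (auto split: prod.splits intro: prob_space_normal_density)
  interpret product_sigma_finite M
    unfolding product_sigma_finite_def using ps by (auto intro: prob_space_imp_sigma_finite)
  define g where "g = (\<lambda>(p::nat\<times>nat) (x::real). if fst p = 0 then ennreal (exp (c * x)) else 1)"
  have eq: "\<And>w. ennreal (exp (c * (\<Sum>j<n. w (0,j)))) = (\<Prod>p\<in>{(i,j). i \<le> j \<and> j < n}. g p (w p))"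
  proof -
    fix w :: "nat \<times> nat \<Rightarrow> real"
    have "(\<Prod>p\<in>{(i,j). i \<le> j \<and> j < n}. g p (w p)) = (\<Prod>j<n. g (0,j) (w (0,j)))"
      by (rule prod_I_reindex) (simp add: g_def)
    also have "\<dots> = (\<Prod>j<n. ennreal (exp (c * w (0,j))))" by (simp add: g_def)
    also have "\<dots> = ennreal (\<Prod>j<n. exp (c * w (0,j)))" by (rule prod_ennreal) simp
    also have "(\<Prod>j<n. exp (c * w (0,j))) = exp (c * (\<Sum>j<n. w (0,j)))"
      by (simp add: exp_sum sum_distrib_left)
    finally show "ennreal (exp (c * (\<Sum>j<n. w (0,j)))) = (\<Prod>p\<in>{(i,j). i \<le> j \<and> j < n}. g p (w p))" ..
  qed
  have "(\<integral>\<^sup>+w. ennreal (exp (c * (\<Sum>j<n. w (0,j)))) \<partial>noise_measure n)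
      = (\<Prod>p\<in>{(i,j). i \<le> j \<and> j < n}. integral\<^sup>N (M p) (g p))"
    unfolding eq noise_measure_def M_def[symmetric]
  proof (rule product_nn_integral_prod)
    show "finite {(i,j). i \<le> j \<and> j < n}"
      by (rule finite_subset[of _ "{..<n} \<times> {..<n}"]) auto
    fix p :: "nat \<times> nat"
    have s: "sets (M p) = sets borel" unfolding M_def by (simp split: prod.splits)
    have "g p \<in> borel_measurable borel" unfolding g_def by simp
    then show "g p \<in> borel_measurable (M p)" by (subst measurable_cong_sets[OF s refl])
  qed
  also have "\<dots> = (\<Prod>j<n. integral\<^sup>N (M (0,j)) (g (0,j)))"
  proof (rule prod_I_reindex)
    fix p :: "nat \<times> nat" assume "fst p \<noteq> 0"
    then have "integral\<^sup>N (M p) (g p) = (\<integral>\<^sup>+x. 1 \<partial>M p)" unfolding g_def by simp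
    also have "\<dots> = 1" using prob_space.emeasure_space_1[OF ps[of p]] by simp
    finally show "integral\<^sup>N (M p) (g p) = 1" .
  qed
  also have "\<dots> = (\<Prod>j<n. ennreal (exp (c^2 * (if j = 0 then 2 else 1) / 2)))"
  proof (rule prod.cong[OF refl])
    fix j assume "j \<in> {..<n}"
    show "integral\<^sup>N (M (0,j)) (g (0,j)) = ennreal (exp (c^2 * (if j = 0 then 2 else 1) / 2))"
      using normal_mgf[of "sqrt 2" c] normal_mgf[of 1 c] by (auto simp: M_def g_def)
  qed
  also have "\<dots> = ennreal (\<Prod>j<n. exp (c^2 * (if j = 0 then 2 else 1) / 2))"
    by (simp add: prod_ennreal)
  also have "(\<Prod>j<n. exp (c^2 * (if j = 0 then 2 else 1) / 2)) = exp (\<Sum>j<n. c^2 * (if j = 0 then 2 else 1) / 2)"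
    by (simp add: exp_sum)
  also have "(\<Sum>j<n. c^2 * (if j = 0 then 2 else 1) / 2) = c^2 * real (n+1) / 2"
  proof -
    have "(\<Sum>j<n. (if j = 0 then 2 else 1::real)) = real n + 1"
    proof -
      have "(\<Sum>j<n. (if j = 0 then 2 else 1::real)) = (\<Sum>j<n. 1 + (if j = 0 then 1 else 0))"
        by (rule sum.cong) auto
      also have "\<dots> = real n + 1" using assms by (simp add: sum.distrib)
      finally show ?thesis .
    qed
    then show ?thesis by (simp add: sum_divide_distrib[symmetric] sum_distrib_left[symmetric])
  qed
  finally show ?thesis .
qed

lemma prob_signal: "0 \<le> \<rho> \<Longrightarrow> \<rho> \<le> 1 \<Longrightarrow> prob_space (signal_measure n \<rho>)"
  unfolding signal_measure_def by (intro prob_space_PiM prob_space_measure_pmf)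

lemma prob_noise: "prob_space (noise_measure n)"
  unfolding noise_measure_def by (intro prob_space_PiM) (auto split: prod.splits intro: prob_space_normal_density)

lemma meas_v: assumes "i < n"
  shows "(\<lambda>v. if v i then 1 else 0 :: real) \<in> borel_measurable (signal_measure n \<rho>)"
proof -
  have "(\<lambda>v. v i) \<in> measurable (signal_measure n \<rho>) (measure_pmf (bernoulli_pmf \<rho>))"
    unfolding signal_measure_def using assms by (intro measurable_component_singleton) auto
  then have m: "(\<lambda>v. v i) \<in> measurable (signal_measure n \<rho>) (count_space UNIV)" by simp
  have "(\<lambda>b::bool. if b then 1 else 0 :: real) \<in> borel_measurable (count_space UNIV)" by simp
  from measurable_comp[OF m this] show ?thesis by (simp add: o_def)
qed

lemma meas_w: assumes "j < n"
  shows "(\<lambda>w. w (0,j)) \<in> borel_measurable (noise_measure n)"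
proof -
  define M where "M = (\<lambda>(i::nat,j::nat). if i = j then density lborel (normal_density 0 (sqrt 2))
              else density lborel (normal_density 0 1))"
  have "(\<lambda>w. w (0,j)) \<in> measurable (noise_measure n) (M (0,j))"
    unfolding noise_measure_def M_def[symmetric] using assms by (intro measurable_component_singleton) auto
  moreover have s: "sets (M (0,j)) = sets borel" unfolding M_def by simp
  ultimately show ?thesis by (simp add: measurable_cong_sets[OF refl s])
qed

lemma meas_F: "(\<lambda>v. ennreal (exp (c * (\<Sum>i<n. if v i then 1 else 0)))) \<in> borel_measurable (signal_measure n \<rho>)"
proof -
  have s[measurable]: "(\<lambda>v. \<Sum>i<n. if v i then 1 else 0::real) \<in> borel_measurable (signal_measure n \<rho>)"
    by (rule borel_measurable_sum, rule meas_v, simp)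
  show ?thesis by measurable
qed

lemma meas_G: "(\<lambda>w. ennreal (exp (c * (\<Sum>j<n. w (0,j))))) \<in> borel_measurable (noise_measure n)"
proof -
  have s[measurable]: "(\<lambda>w. \<Sum>j<n. w (0,j)) \<in> borel_measurable (noise_measure n)"
    by (rule borel_measurable_sum, rule meas_w, simp)
  show ?thesis by measurable
qed

lemma pair_prod:
  assumes "0 \<le> \<rho>" "\<rho> \<le> 1"
    and F: "F \<in> borel_measurable (signal_measure n \<rho>)" and G: "G \<in> borel_measurable (noise_measure n)"
  shows "(\<integral>\<^sup>+\<omega>. F (fst \<omega>) * G (snd \<omega>) \<partial>planted_measure n \<rho>)
       = (\<integral>\<^sup>+v. F v \<partial>signal_measure n \<rho>) * (\<integral>\<^sup>+w. G w \<partial>noise_measure n)"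
proof -
  interpret N: prob_space "noise_measure n" by (rule prob_noise)
  have m: "(\<lambda>\<omega>. F (fst \<omega>) * G (snd \<omega>)) \<in> borel_measurable (signal_measure n \<rho> \<Otimes>\<^sub>M noise_measure n)"
    using F G by measurable
  have "(\<integral>\<^sup>+\<omega>. F (fst \<omega>) * G (snd \<omega>) \<partial>planted_measure n \<rho>)
      = (\<integral>\<^sup>+x. \<integral>\<^sup>+y. F x * G y \<partial>noise_measure n \<partial>signal_measure n \<rho>)"
    unfolding planted_measure_def using N.nn_integral_fst[OF m] by simp
  also have "\<dots> = (\<integral>\<^sup>+x. F x * (\<integral>\<^sup>+y. G y \<partial>noise_measure n) \<partial>signal_measure n \<rho>)"
    by (intro nn_integral_cong nn_integral_cmult G)
  also have "\<dots> = (\<integral>\<^sup>+v. F v \<partial>signal_measure n \<rho>) * (\<integral>\<^sup>+w. G w \<partial>noise_measure n)"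
    by (rule nn_integral_multc[OF F])
  finally show ?thesis .
qed

lemma numeric:
  fixes n k :: nat and lam \<rho> r :: real
  assumes n1: "n \<ge> 1"
    and r0: "0 < \<rho>" and r1: "\<rho> \<le> 1/2"
    and l0: "0 < lam"
    and q0: "0 < r" and q1: "r < 1"
    and hl: "lam \<ge> 24 / (r * \<rho> * sqrt (real n)) *
            sqrt (ln 8 + 2 * real (2*k+1) * ln (9 / \<rho>))"
    and hr: "\<rho> \<ge> 324 / (r\<^sup>2 * real n) * (ln 8 + 2 * real (2*k+1) * ln (9 / \<rho>))"
  defines "\<theta> \<equiv> 8 * real (2*k+2) / r + 2 * real k"
    and "N \<equiv> lam * \<rho> * real n"
  defines "g \<equiv> exp ((\<theta> / N)^2 * real (n+1) / 2)"
  shows "(real (2*k+1) * real ((2*k) choose k))^2 * (r/8)^(2*k+2) *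
          ((exp (-\<theta>) * (1 - \<rho> + \<rho> * exp (\<theta> / (\<rho> * real n)))^n * g + (1 - \<rho> + \<rho> * exp 0)^n * g)
         + (exp (-(-\<theta>)) * (1 - \<rho> + \<rho> * exp ((-\<theta>) / (\<rho> * real n)))^n * g + (1 - \<rho> + \<rho> * exp 0)^n * g))
       \<le> real (2*k+1) ^ 2 * r ^ (2*k)"
proof -
  define Bs where "Bs = ln 8 + 2 * real (2*k+1) * ln (9 / \<rho>)"
  define K where "K = real k + 1"
  have K1: "K \<ge> 1" unfolding K_def by simp
  have nr: "real n \<ge> 1" using n1 by simp
  have Bs: "Bs \<ge> 2 * K"
  proof -
    have "ln 8 \<ge> (0::real)" by simp
    have "exp 1 \<le> (3::real)" using exp_le by simp
    moreover have "9 / \<rho> \<ge> 18" using r0 r1 by (simp add: field_simps)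
    ultimately have "exp 1 \<le> 9 / \<rho>" by linarith
    then have "ln (9 / \<rho>) \<ge> 1" using r0 by (simp add: ln_ge_iff)
    then have a: "2 * real (2*k+1) * 1 \<le> 2 * real (2*k+1) * ln (9 / \<rho>)"
      by (intro mult_left_mono) auto
    have b: "2 * K \<le> 2 * real (2*k+1) * 1" unfolding K_def by simp
    have "2 * K \<le> 2 * real (2*k+1) * ln (9 / \<rho>)" by (rule order.trans[OF b a])
    also have "\<dots> \<le> Bs" unfolding Bs_def using \<open>ln 8 \<ge> 0\<close> by simp
    finally show ?thesis .
  qed
  have Bs0: "Bs > 0" using Bs K1 by simp
  have th0: "\<theta> > 0" unfolding \<theta>_def using q0 by (intro add_pos_nonneg divide_pos_pos) auto
  have th: "\<theta> \<le> 18 * K / r"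
  proof -
    have a: "2 * K \<le> 2 * K / r" using q0 q1 K1 by (intro mult_imp_le_div_pos mult_left_le) auto
    have b: "2 * real k \<le> 2 * K" unfolding K_def by simp
    have "2 * real k \<le> 2 * K / r" using a b by linarith
    moreover have "\<theta> = 16 * K / r + 2 * real k" unfolding \<theta>_def K_def by simp
    moreover have "18 * K / r = 16 * K / r + 2 * K / r" by (simp add: add_divide_distrib[symmetric])
    ultimately show ?thesis by linarith
  qed
  have th2: "\<theta>^2 \<le> 324 * K^2 / r^2"
  proof -
    have "\<theta>^2 \<le> (18 * K / r)^2" using th th0 by (intro power_mono) auto
    then show ?thesis by (simp add: power_divide power_mult_distrib)
  qed
  have N0: "N > 0" unfolding N_def using l0 r0 n1 by simp
  have NB: "N^2 \<ge> 576 * Bs * real n / r^2"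
  proof -
    have sn: "sqrt (real n) > 0" using n1 by simp
    have "24 / (r * \<rho> * sqrt (real n)) * sqrt Bs * (\<rho> * real n) \<le> lam * (\<rho> * real n)"
      using hl r0 n1 unfolding Bs_def by (intro mult_right_mono) auto
    then have "N \<ge> 24 / (r * \<rho> * sqrt (real n)) * sqrt Bs * (\<rho> * real n)"
      unfolding N_def by (simp add: mult.assoc)
    also have "24 / (r * \<rho> * sqrt (real n)) * sqrt Bs * (\<rho> * real n) = 24 * sqrt Bs * sqrt (real n) / r"
    proof -
      have "real n = sqrt (real n) * sqrt (real n)" by simp
      then show ?thesis using sn r0 q0 by (simp add: field_simps)
    qed
    finally have h: "24 * sqrt Bs * sqrt (real n) / r \<le> N" .
    have "(24 * sqrt Bs * sqrt (real n) / r)^2 \<le> N^2"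
      using h q0 Bs0 by (intro power_mono) auto
    moreover have "(24 * sqrt Bs * sqrt (real n) / r)^2 = 576 * Bs * real n / r^2"
      using Bs0 by (simp add: power_divide power_mult_distrib)
    ultimately show ?thesis by simp
  qed
  have nrho: "real n * \<rho> \<ge> 324 * Bs / r^2"
  proof -
    have "real n * \<rho> \<ge> real n * (324 / (r\<^sup>2 * real n) * Bs)"
      using hr unfolding Bs_def by (intro mult_left_mono) auto
    then show ?thesis using n1 by (simp add: field_simps)
  qed
  have nrho0: "real n * \<rho> > 0" using n1 r0 by simp
  define Bq where "Bq = (\<theta> / N)^2 * real (n+1) / 2"
  have Bq: "Bq \<le> 324 * K / 1152"
  proof -
    have "Bq = \<theta>^2 * (real n + 1) / (2 * N^2)" unfolding Bq_def by (simp add: power_divide algebra_simps)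
    also have "\<dots> \<le> \<theta>^2 * (2 * real n) / (2 * (576 * Bs * real n / r^2))"
      using NB nr Bs0 q0 by (intro frac_le mult_left_mono mult_pos_pos) auto
    also have "\<dots> = \<theta>^2 * r^2 / (576 * Bs)" using nr q0 by (simp add: field_simps)
    also have "\<dots> \<le> (324 * K^2 / r^2) * r^2 / (576 * Bs)"
      using th2 Bs0 by (intro divide_right_mono mult_right_mono) auto
    also have "\<dots> = 324 * K^2 / (576 * Bs)" using q0 by simp
    also have "\<dots> \<le> 324 * K^2 / (576 * (2 * K))"
      using Bs K1 by (intro divide_left_mono mult_left_mono) auto
    also have "\<dots> = 324 * K / 1152" using K1 by (simp add: power2_eq_square)
    finally show ?thesis .
  qed
  define h where "h = \<theta> / (\<rho> * real n)"
  have h0: "h \<ge> 0" unfolding h_def using th0 r0 n1 by simp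
  have thh: "\<theta> = real n * \<rho> * h" unfolding h_def using r0 n1 by simp
  define A where "A = real n * \<rho> * h^2"
  have A_eq: "A = \<theta>^2 / (real n * \<rho>)" unfolding A_def h_def using r0 n1 by (simp add: power2_eq_square field_simps)
  have A: "A \<le> K / 2"
  proof -
    have "A \<le> \<theta>^2 / (324 * Bs / r^2)" unfolding A_eq using nrho nrho0 Bs0 q0 by (intro divide_left_mono) (auto intro!: mult_pos_pos divide_pos_pos)
    also have "\<dots> = \<theta>^2 * r^2 / (324 * Bs)" by simp
    also have "\<dots> \<le> (324 * K^2 / r^2) * r^2 / (324 * Bs)"
      using th2 Bs0 by (intro divide_right_mono mult_right_mono) auto
    also have "\<dots> = K^2 / Bs" using q0 by simp
    also have "\<dots> \<le> K^2 / (2 * K)" using Bs K1 by (intro divide_left_mono) auto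
    also have "\<dots> = K / 2" using K1 by (simp add: power2_eq_square)
    finally show ?thesis .
  qed
  have h1: "h \<le> 1"
  proof -
    have "h = \<theta> / (real n * \<rho>)" unfolding h_def by (simp add: mult.commute)
    also have "\<dots> \<le> (18 * K / r) / (324 * Bs / r^2)"
      using th th0 nrho Bs0 q0 by (intro frac_le) auto
    also have "\<dots> = K * r / (18 * Bs)" using q0 by (simp add: power2_eq_square field_simps)
    also have "\<dots> \<le> K * 1 / (18 * (2 * K))"
      using q0 q1 Bs K1 by (intro frac_le mult_left_mono) auto
    also have "\<dots> \<le> 1" using K1 by simp
    finally show ?thesis .
  qed
  have P1: "exp (-\<theta>) * (1 - \<rho> + \<rho> * exp (\<theta> / (\<rho> * real n)))^n \<le> exp A"
    using mgf_pos[of \<rho> h n] r0 r1 h0 h1 unfolding A_def thh[symmetric] h_def[symmetric] by simp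
  have P2: "exp (-(-\<theta>)) * (1 - \<rho> + \<rho> * exp ((-\<theta>) / (\<rho> * real n)))^n \<le> exp A"
  proof -
    have e: "(-\<theta>) / (\<rho> * real n) = - h" unfolding h_def by simp
    show ?thesis using mgf_neg[of \<rho> h n] r0 r1 h0 h1 unfolding A_def thh[symmetric] e by simp
  qed
  have gB: "g = exp Bq" unfolding g_def Bq_def ..
  have eA: "exp A \<ge> 1" using A_def r0 by simp
  have S: "(exp (-\<theta>) * (1 - \<rho> + \<rho> * exp (\<theta> / (\<rho> * real n)))^n * g + (1 - \<rho> + \<rho> * exp 0)^n * g)
         + (exp (-(-\<theta>)) * (1 - \<rho> + \<rho> * exp ((-\<theta>) / (\<rho> * real n)))^n * g + (1 - \<rho> + \<rho> * exp 0)^n * g)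
         \<le> 4 * exp (A + Bq)" (is "?S \<le> _")
  proof -
    have g0: "g > 0" unfolding g_def by simp
    have "exp (-\<theta>) * (1 - \<rho> + \<rho> * exp (\<theta> / (\<rho> * real n)))^n * g \<le> exp A * g"
      using P1 g0 by (intro mult_right_mono) auto
    moreover have "exp (-(-\<theta>)) * (1 - \<rho> + \<rho> * exp ((-\<theta>) / (\<rho> * real n)))^n * g \<le> exp A * g"
      using P2 g0 by (intro mult_right_mono) auto
    moreover have "(1 - \<rho> + \<rho> * exp 0)^n * g \<le> exp A * g" using eA g0 by simp
    ultimately have "?S \<le> 4 * (exp A * g)" by linarith
    then show ?thesis unfolding gB by (simp add: exp_add)
  qed
  have AB: "A + Bq \<le> K" using A Bq K1 by simp
  have E4: "exp (A + Bq) \<le> 4 ^ (k+1)"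
  proof -
    have "exp (A + Bq) \<le> exp K" using AB by simp
    also have "exp K = exp 1 ^ (k+1)" unfolding K_def by (simp add: exp_of_nat_mult[symmetric] exp_add mult.commute)
    also have "\<dots> \<le> 4 ^ (k+1)"
    proof -
      have "exp 1 \<le> (4::real)" using exp_le by simp
      then show ?thesis by (intro power_mono) auto
    qed
    finally show ?thesis .
  qed
  have cb: "real ((2*k) choose k) \<le> 4^k"
  proof -
    have "(2*k) choose k \<le> 2^(2*k)" by (rule binomial_le_pow2)
    also have "(2::nat)^(2*k) = 4^k" by (simp add: power_mult)
    finally show ?thesis by (metis of_nat_le_iff of_nat_numeral of_nat_power)
  qed
  have c2: "(real (2*k+1) * real ((2*k) choose k))^2 \<le> real (2*k+1)^2 * 16^k"
  proof -
    have "(real (2*k+1) * real ((2*k) choose k))^2 \<le> (real (2*k+1) * 4^k)^2"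
      using cb by (intro power_mono mult_left_mono) auto
    also have "\<dots> = real (2*k+1)^2 * ((4::real)^k)^2" by (simp add: power_mult_distrib)
    also have "((4::real)^k)^2 = 16^k"
    proof -
      have "((4::real)^k)^2 = (4^k)*(4^k)" by (rule power2_eq_square)
      also have "\<dots> = (4*4)^k" by (rule power_mult_distrib[symmetric])
      finally show ?thesis by simp
    qed
    finally show ?thesis .
  qed
  have key: "16^k * (1/8)^(2*k+2) * 4 * 4^(k+1) = (1/4::real)"
  proof -
    have a: "(1/8::real)^(2*k+2) = (1/64)^(k+1)"
    proof -
      have "(1/8::real)^(2*k+2) = (1/8)^(2*(k+1))" by simp
      also have "\<dots> = ((1/8)^2)^(k+1)" by (rule power_mult)
      also have "(1/8::real)^2 = 1/64" by (simp add: power2_eq_square)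
      finally show ?thesis .
    qed
    have b: "(16::real)^k * 4^k = 64^k" by (simp add: power_mult_distrib[symmetric])
    have "(16::real)^k * (1/64)^(k+1) * 4 * 4^(k+1) = (16^k * 4^k) * 16 * (1/64)^k * (1/64)" by simp
    also have "\<dots> = (64^k * (1/64)^k) * (16/64)" unfolding b by simp
    also have "(64::real)^k * (1/64)^k = 1" by (simp add: power_mult_distrib[symmetric])
    finally show ?thesis unfolding a by simp
  qed
  define C0 where "C0 = (real (2*k+1) * real ((2*k) choose k))^2 * (r/8)^(2*k+2)"
  have C00: "C0 \<ge> 0" unfolding C0_def using q0 by simp
  have "C0 * ?S \<le> C0 * (4 * 4^(k+1))"
    using S E4 C00 by (intro mult_left_mono) auto
  also have "\<dots> \<le> real (2*k+1)^2 * 16^k * (r/8)^(2*k+2) * (4 * 4^(k+1))"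
    unfolding C0_def using c2 q0 by (intro mult_right_mono) auto
  also have "\<dots> = real (2*k+1)^2 * r^(2*k) * r^2 * (16^k * (1/8)^(2*k+2) * 4 * 4^(k+1))"
    by (simp add: power_divide power_add field_simps power2_eq_square)
  also have "\<dots> = real (2*k+1)^2 * r^(2*k) * (r^2 / 4)" unfolding key by simp
  also have "\<dots> \<le> real (2*k+1)^2 * r^(2*k) * 1"
  proof -
    have "r^2 \<le> 1" using q0 q1 by (simp add: power_le_one)
    then show ?thesis by (intro mult_left_mono) auto
  qed
  finally show ?thesis unfolding C0_def by simp
qed

lemma meas_P: "(\<lambda>\<omega>. ennreal (exp (c1 * (\<Sum>i<n. if fst \<omega> i then 1 else 0))) * ennreal (exp (c2 * (\<Sum>j<n. snd \<omega> (0,j)))))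
   \<in> borel_measurable (planted_measure n \<rho>)"
proof -
  note meas_F[of c1 n \<rho>, measurable] meas_G[of c2 n, measurable]
  show ?thesis unfolding planted_measure_def by measurable
qed

lemma int_P: assumes "0 \<le> \<rho>" "\<rho> \<le> 1" "n \<ge> 1"
  shows "(\<integral>\<^sup>+\<omega>. ennreal (exp (c1 * (\<Sum>i<n. if fst \<omega> i then 1 else 0))) * ennreal (exp (c2 * (\<Sum>j<n. snd \<omega> (0,j)))) \<partial>planted_measure n \<rho>)
     = ennreal ((1 - \<rho> + \<rho> * exp c1)^n * exp (c2^2 * real (n+1) / 2))"
  using pair_prod[OF assms(1,2) meas_F meas_G] signal_mgf[OF assms(1,2)] noise_mgf[OF assms(3)] assms
  by (simp add: ennreal_mult)

lemma sumY: "(\<Sum>i<n. Ymat lam \<omega> 0 i) = lam * vvec \<omega> 0 * (\<Sum>i<n. if fst \<omega> i then 1 else 0) + (\<Sum>j<n. snd \<omega> (0,j))"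
  unfolding Ymat_def Wmat_def vvec_def by (simp add: sum.distrib sum_distrib_left)

lemma ennreal_combo:
  fixes c e1 e2 p1 q1 p2 q2 p3 q3 p4 q4 :: real
  assumes "c \<ge> 0" "e1 \<ge> 0" "e2 \<ge> 0" "p1 \<ge> 0" "q1 \<ge> 0" "p2 \<ge> 0" "q2 \<ge> 0" "p3 \<ge> 0" "q3 \<ge> 0" "p4 \<ge> 0" "q4 \<ge> 0"
  shows "ennreal (c * ((e1 * (p1 * q1) + p2 * q2) + (e2 * (p3 * q3) + p4 * q4)))
    = ennreal c * ((ennreal e1 * (ennreal p1 * ennreal q1) + ennreal p2 * ennreal q2) + (ennreal e2 * (ennreal p3 * ennreal q3) + ennreal p4 * ennreal q4))"
  using assms by (simp add: ennreal_mult ennreal_plus mult_nonneg_nonneg add_nonneg_nonneg)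

lemma ennreal_combo2:
  fixes c e1 e2 x1 x2 x3 x4 :: real
  assumes "c \<ge> 0" "e1 \<ge> 0" "e2 \<ge> 0" "x1 \<ge> 0" "x2 \<ge> 0" "x3 \<ge> 0" "x4 \<ge> 0"
  shows "ennreal c * ((ennreal e1 * ennreal x1 + ennreal x2) + (ennreal e2 * ennreal x3 + ennreal x4))
     = ennreal (c * ((e1 * x1 + x2) + (e2 * x3 + x4)))"
  using assms by (simp add: ennreal_mult ennreal_plus mult_nonneg_nonneg add_nonneg_nonneg)

lemma base_nonneg: "0 \<le> (\<rho>::real) \<Longrightarrow> \<rho> \<le> 1 \<Longrightarrow> 0 \<le> (1 - \<rho> + \<rho> * exp a)^n * exp b"
  by (intro mult_nonneg_nonneg zero_le_power add_nonneg_nonneg) auto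

theorem mainTheorem12:
  fixes n k :: nat and lam \<rho> r :: real
  assumes "n \<ge> 1"
    and "0 < \<rho>" and "\<rho> \<le> 1/2"
    and "0 < lam"
    and "0 < r" and "r < 1"
    and "lam \<ge> 24 / (r * \<rho> * sqrt (real n)) *
            sqrt (ln 8 + 2 * real (2*k+1) * ln (9 / \<rho>))"
    and "\<rho> \<ge> 324 / (r\<^sup>2 * real n) * (ln 8 + 2 * real (2*k+1) * ln (9 / \<rho>))"
  shows "(\<integral>\<^sup>+ \<omega>. ennreal ((tau k (1 / (lam * \<rho> * real n) * (\<Sum>i<n. Ymat lam \<omega> 0 i))
                              - vvec \<omega> 0)\<^sup>2) \<partial>planted_measure n \<rho>)
         \<le> ennreal (real (2*k+1) ^ 2 * r ^ (2*k))"
proof -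
  note A = assms
  define \<theta> where "\<theta> = 8 * real (2*k+2) / r + 2 * real k"
  define N where "N = lam * \<rho> * real n"
  define c0 where "c0 = (real (2*k+1) * real ((2*k) choose k))^2 * (r/8)^(2*k+2)"
  define Vs where "Vs = (\<lambda>\<omega>::(nat \<Rightarrow> bool) \<times> (nat \<times> nat \<Rightarrow> real). (\<Sum>i<n. if fst \<omega> i then 1 else 0::real))"
  define Ws where "Ws = (\<lambda>\<omega>::(nat \<Rightarrow> bool) \<times> (nat \<times> nat \<Rightarrow> real). (\<Sum>j<n. snd \<omega> (0,j)))"
  define P where "P = (\<lambda>c1 c2 \<omega>. ennreal (exp (c1 * Vs \<omega>)) * ennreal (exp (c2 * Ws \<omega>)))"
  have c00: "c0 \<ge> 0" unfolding c0_def using A by simp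
  have N0: "N > 0" unfolding N_def using A by simp
  have mP[measurable]: "\<And>c1 c2. P c1 c2 \<in> borel_measurable (planted_measure n \<rho>)"
    unfolding P_def Vs_def Ws_def by (rule meas_P)
  have iP: "\<And>c1 c2. integral\<^sup>N (planted_measure n \<rho>) (P c1 c2) = ennreal ((1 - \<rho> + \<rho> * exp c1)^n * exp (c2^2 * real (n+1) / 2))"
    unfolding P_def Vs_def Ws_def using A by (intro int_P) auto
  define e1 where "e1 = exp (-\<theta>)"
  define e2 where "e2 = exp (-(-\<theta>))"
  define a1 where "a1 = \<theta> / (\<rho> * real n)"
  define a2 where "a2 = (-\<theta>) / (\<rho> * real n)"
  define b1 where "b1 = \<theta> / N"
  define b2 where "b2 = (-\<theta>) / N"
  have pw: "ennreal ((tau k (1 / (lam * \<rho> * real n) * (\<Sum>i<n. Ymat lam \<omega> 0 i)) - vvec \<omega> 0)\<^sup>2)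
      \<le> ennreal c0 * ((ennreal e1 * P a1 b1 \<omega> + P 0 b1 \<omega>) + (ennreal e2 * P a2 b2 \<omega> + P 0 b2 \<omega>))" for \<omega>
  proof -
    define y where "y = 1 / (lam * \<rho> * real n) * (\<Sum>i<n. Ymat lam \<omega> 0 i)"
    define a where "a = vvec \<omega> 0"
    define d1 where "d1 = Vs \<omega> / (\<rho> * real n) - 1 + Ws \<omega> / N"
    define d0 where "d0 = Ws \<omega> / N"
    have a01: "a = 0 \<or> a = 1" unfolding a_def vvec_def by simp
    have yd: "y - a = d1 \<or> y - a = d0"
    proof (cases "fst \<omega> 0")
      case True
      then have va: "vvec \<omega> 0 = 1" unfolding vvec_def by simp
      have "y - a = (lam * Vs \<omega> + Ws \<omega>) / N - 1"
        unfolding y_def sumY N_def Vs_def Ws_def a_def va by simp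
      also have "\<dots> = d1" unfolding d1_def N_def using A by (simp add: field_simps)
      finally show ?thesis by simp
    next
      case False
      then have va: "vvec \<omega> 0 = 0" unfolding vvec_def by simp
      have "y - a = d0" unfolding y_def sumY d0_def N_def Ws_def a_def va by simp
      then show ?thesis by simp
    qed
    have ex: "exp (s * (y - a)) \<le> exp (s * d1) + exp (s * d0)" for s
      using yd by (metis add_increasing add_increasing2 exp_ge_zero order_refl)
    have p1: "exp (\<theta> * d1) = e1 * (exp (a1 * Vs \<omega>) * exp (b1 * Ws \<omega>))"
      unfolding e1_def a1_def b1_def d1_def by (simp add: exp_add[symmetric] algebra_simps)
    have p2: "exp (\<theta> * d0) = exp (0 * Vs \<omega>) * exp (b1 * Ws \<omega>)"
      unfolding b1_def d0_def by simp
    have p3: "exp (-\<theta> * d1) = e2 * (exp (a2 * Vs \<omega>) * exp (b2 * Ws \<omega>))"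
      unfolding e2_def a2_def b2_def d1_def by (simp add: exp_add[symmetric] algebra_simps)
    have p4: "exp (-\<theta> * d0) = exp (0 * Vs \<omega>) * exp (b2 * Ws \<omega>)"
      unfolding b2_def d0_def by simp
    have "(tau k y - a)^2 \<le> c0 * (exp (\<theta> * (y - a)) + exp (- (\<theta> * (y - a))))"
      using pointwise[OF A(5) a01, of k y] unfolding c0_def \<theta>_def by simp
    also have "\<dots> \<le> c0 * ((exp (\<theta> * d1) + exp (\<theta> * d0)) + (exp (-\<theta> * d1) + exp (-\<theta> * d0)))"
      using ex[of \<theta>] ex[of "-\<theta>"] c00 by (intro mult_left_mono) auto
    also have "\<dots> = c0 * ((e1 * (exp (a1 * Vs \<omega>) * exp (b1 * Ws \<omega>)) + exp (0 * Vs \<omega>) * exp (b1 * Ws \<omega>))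
                     + (e2 * (exp (a2 * Vs \<omega>) * exp (b2 * Ws \<omega>)) + exp (0 * Vs \<omega>) * exp (b2 * Ws \<omega>)))"
      unfolding p1 p2 p3 p4 ..
    finally have r: "(tau k y - a)^2 \<le> \<dots>" .
    have e10: "e1 \<ge> 0" "e2 \<ge> 0" unfolding e1_def e2_def by auto
    have "ennreal ((tau k y - a)^2) \<le> ennreal (c0 * ((e1 * (exp (a1 * Vs \<omega>) * exp (b1 * Ws \<omega>)) + exp (0 * Vs \<omega>) * exp (b1 * Ws \<omega>))
                     + (e2 * (exp (a2 * Vs \<omega>) * exp (b2 * Ws \<omega>)) + exp (0 * Vs \<omega>) * exp (b2 * Ws \<omega>))))"
      using r by (rule ennreal_leI)
    also have "\<dots> = ennreal c0 * ((ennreal e1 * P a1 b1 \<omega> + P 0 b1 \<omega>) + (ennreal e2 * P a2 b2 \<omega> + P 0 b2 \<omega>))"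
      unfolding P_def using c00 e10 by (intro ennreal_combo) auto
    finally show ?thesis unfolding y_def a_def .
  qed
  have "(\<integral>\<^sup>+ \<omega>. ennreal ((tau k (1 / (lam * \<rho> * real n) * (\<Sum>i<n. Ymat lam \<omega> 0 i)) - vvec \<omega> 0)\<^sup>2) \<partial>planted_measure n \<rho>)
      \<le> (\<integral>\<^sup>+ \<omega>. ennreal c0 * ((ennreal e1 * P a1 b1 \<omega> + P 0 b1 \<omega>) + (ennreal e2 * P a2 b2 \<omega> + P 0 b2 \<omega>)) \<partial>planted_measure n \<rho>)"
    by (intro nn_integral_mono pw)
  also have "\<dots> = ennreal c0 * ((ennreal e1 * integral\<^sup>N (planted_measure n \<rho>) (P a1 b1) + integral\<^sup>N (planted_measure n \<rho>) (P 0 b1))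
          + (ennreal e2 * integral\<^sup>N (planted_measure n \<rho>) (P a2 b2) + integral\<^sup>N (planted_measure n \<rho>) (P 0 b2)))"
    by (simp add: nn_integral_cmult nn_integral_add)
  also have "\<dots> = ennreal (c0 * ((e1 * ((1 - \<rho> + \<rho> * exp a1)^n * exp (b1^2 * real (n+1) / 2)) + (1 - \<rho> + \<rho> * exp 0)^n * exp (b1^2 * real (n+1) / 2))
          + (e2 * ((1 - \<rho> + \<rho> * exp a2)^n * exp (b2^2 * real (n+1) / 2)) + (1 - \<rho> + \<rho> * exp 0)^n * exp (b2^2 * real (n+1) / 2))))"
    unfolding iP using c00 A by (intro ennreal_combo2 base_nonneg) (auto simp: e1_def e2_def)
  also have "\<dots> \<le> ennreal (real (2*k+1) ^ 2 * r ^ (2*k))"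
  proof (rule ennreal_leI)
    have b2: "b2^2 = b1^2" unfolding b1_def b2_def by (simp add: power2_eq_square)
    show "c0 * ((e1 * ((1 - \<rho> + \<rho> * exp a1)^n * exp (b1^2 * real (n+1) / 2)) + (1 - \<rho> + \<rho> * exp 0)^n * exp (b1^2 * real (n+1) / 2))
          + (e2 * ((1 - \<rho> + \<rho> * exp a2)^n * exp (b2^2 * real (n+1) / 2)) + (1 - \<rho> + \<rho> * exp 0)^n * exp (b2^2 * real (n+1) / 2)))
        \<le> real (2*k+1) ^ 2 * r ^ (2*k)"
      using numeric[OF A] unfolding b2 unfolding c0_def e1_def e2_def a1_def a2_def b1_def \<theta>_def N_def
      by (simp add: mult.assoc)
  qed
  finally show ?thesis .
qed

end
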